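(* Let $\mathcal{X}\subset\mathbb{R}^n$ be a convex connected domain containing $0$, let $K:\mathcal{X}\to\mathbb{R}$ be smooth with $\nabla^2K(x)>0$ for all $x$, let $\mathcal{U}=\mathbb{R}^m$, and let $V:\mathcal{X}\times\mathcal{U}\to\mathbb{R}$ be smooth with $$x^\top\frac{\partial V}{\partial x}(x,u)-u^\top\frac{\partial V}{\partial u}(x,u)\ge 0\quad\text{for all }x,u.$$ Consider the (nonlinear relaxation) system $$\nabla^2K(x)\,\dot x=-\frac{\partial V}{\partial x}(x,u),\qquad y=-\frac{\partial V}{\partial u}(x,u).$$ Then the system is passive with storage function $S(x):=K^*(\nabla K(x))$; that is, $S$ is bounded from below on $\mathcal{X}$ and $\nabla S(x)\dot x\le u^\top y$ for all $x\in\mathcal{X}$, $u\in\mathcal{U}$, where $\dot x=-(\nabla^2K(x))^{-1}\frac{\partial V}{\partial x}(x,u)$ and $y=-\frac{\partial V}{\partial u}(x,u)$.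
   Context: $K^*$ denotes the Legendre transform of $K$: with $\mathcal{Z}$ the image of the injective map $x\mapsto\nabla K(x)$, $K^*(z)=z^\top x-K(x)$ where $x$ solves $z=\nabla K(x)$ (equivalently $K^*(z)=\sup_x z^\top x-K(x)$ since $K$ is strictly convex). $\nabla$ denotes the gradient and $\nabla^2$ the Hessian. *)

theory Defs
  imports "HOL-Analysis.Analysis"
begin

fun Ck_on :: "nat \<Rightarrow> ('a::euclidean_space \<Rightarrow> real) \<Rightarrow> 'a set \<Rightarrow> bool" where
  "Ck_on 0 f S = continuous_on S f"
| "Ck_on (Suc k) f S =
     (continuous_on S f \<and> (\<forall>x\<in>S. f differentiable (at x)) \<and>
      (\<forall>b\<in>Basis. Ck_on k (\<lambda>x. frechet_derivative f (at x) b) S))"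

definition smooth_on :: "('a::euclidean_space \<Rightarrow> real) \<Rightarrow> 'a set \<Rightarrow> bool" where
  "smooth_on f S \<longleftrightarrow> (\<forall>k. Ck_on k f S)"

definition grad :: "(real^'n \<Rightarrow> real) \<Rightarrow> real^'n \<Rightarrow> real^'n" where
  "grad f x = (\<chi> i. frechet_derivative f (at x) (axis i 1))"

definition hess :: "(real^'n \<Rightarrow> real) \<Rightarrow> real^'n \<Rightarrow> real^'n^'n" where
  "hess f x = (\<chi> i j. frechet_derivative (\<lambda>y. grad f y $ i) (at x) (axis j 1))"

definition pos_def :: "real^'n^'n \<Rightarrow> bool" where
  "pos_def A \<longleftrightarrow> (\<forall>v. v \<noteq> 0 \<longrightarrow> v \<bullet> (A *v v) > 0)"

definition legendre :: "(real^'n \<Rightarrow> real) \<Rightarrow> (real^'n) set \<Rightarrow> real^'n \<Rightarrow> real" where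
  "legendre K X z = (let x = (THE x. x \<in> X \<and> grad K x = z) in z \<bullet> x - K x)"

end

theory Submission
  imports Defs
begin

lemma deriv_line:
  fixes f :: "real^'n \<Rightarrow> real"
  assumes "f differentiable (at (a + t *\<^sub>R d))"
  shows "((\<lambda>t. f (a + t *\<^sub>R d)) has_real_derivative frechet_derivative f (at (a + t *\<^sub>R d)) d) (at t)"
proof -
  let ?L = "frechet_derivative f (at (a + t *\<^sub>R d))"
  have fL: "(f has_derivative ?L) (at (a + t *\<^sub>R d))" using assms frechet_derivative_works by blast
  have lin: "linear ?L" using fL has_derivative_linear by blast
  have g: "((\<lambda>t. a + t *\<^sub>R d) has_derivative (\<lambda>s. s *\<^sub>R d)) (at t)"
    by (auto intro!: derivative_eq_intros)
  have "((\<lambda>t. f (a + t *\<^sub>R d)) has_derivative (\<lambda>s. ?L (s *\<^sub>R d))) (at t)"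
    using diff_chain_at[OF g fL] by (simp add: o_def)
  moreover have "(\<lambda>s. ?L (s *\<^sub>R d)) = (\<lambda>s. s * ?L d)"
    using lin by (simp add: linear_scale)
  moreover have "(\<lambda>s. s * ?L d) = (*) (?L d)" by (auto simp: fun_eq_iff)
  ultimately show ?thesis by (simp add: has_field_derivative_def)
qed

lemma grad_inner:
  fixes f :: "real^'n \<Rightarrow> real"
  assumes "f differentiable (at y)"
  shows "grad f y \<bullet> w = frechet_derivative f (at y) w"
proof -
  let ?L = "frechet_derivative f (at y)"
  have lin: "linear ?L" using assms frechet_derivative_works has_derivative_linear by blast
  have "?L w = ?L (\<Sum>i\<in>UNIV. w$i *\<^sub>R axis i 1)"
    using basis_expansion[of w] by (simp add: scalar_mult_eq_scaleR)
  also have "\<dots> = (\<Sum>i\<in>UNIV. w$i * ?L (axis i 1))"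
    using lin by (simp add: linear_sum linear_scale)
  finally show ?thesis by (simp add: grad_def inner_vec_def mult.commute)
qed

theorem mainTheorem4:
  fixes X :: "(real^'n) set"
    and K :: "real^'n \<Rightarrow> real"
    and V :: "real^'n \<Rightarrow> real^'m \<Rightarrow> real"
  assumes X_open: "open X" and X_convex: "convex X" and X_conn: "connected X"
    and zero_in: "0 \<in> X"
    and K_smooth: "smooth_on K X"
    and K_pd: "\<forall>x\<in>X. pos_def (hess K x)"
    and V_smooth: "smooth_on (\<lambda>p. V (fst p) (snd p)) (X \<times> UNIV)"
    and V_cond: "\<forall>x\<in>X. \<forall>u. x \<bullet> grad (\<lambda>x'. V x' u) x - u \<bullet> grad (\<lambda>u'. V x u') u \<ge> 0"
  shows "bdd_below ((\<lambda>x. legendre K X (grad K x)) ` X) \<and>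
         (\<forall>x\<in>X. \<forall>u.
            grad (\<lambda>x'. legendre K X (grad K x')) x \<bullet>
              (- (matrix_inv (hess K x) *v grad (\<lambda>x'. V x' u) x))
            \<le> u \<bullet> (- grad (\<lambda>u'. V x u') u))"
proof -
  have C2: "Ck_on (Suc (Suc 0)) K X" using K_smooth smooth_on_def by blast
  have diffK: "\<And>y. y \<in> X \<Longrightarrow> K differentiable at y" using C2 by simp
  have gi_eq: "\<And>i. (\<lambda>z. grad K z $ i) = (\<lambda>z. frechet_derivative K (at z) (axis i 1))"
    by (simp add: grad_def)
  have C1: "\<forall>b\<in>Basis. Ck_on (Suc 0) (\<lambda>x. frechet_derivative K (at x) b) X" using C2 by simp
  have diffg: "\<And>y i. y \<in> X \<Longrightarrow> (\<lambda>z. grad K z $ i) differentiable at y"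
  proof -
    fix y and i :: 'n assume "y \<in> X"
    have "axis i (1::real) \<in> Basis" by simp
    with C1 have "Ck_on (Suc 0) (\<lambda>x. frechet_derivative K (at x) (axis i 1)) X" by blast
    with \<open>y \<in> X\<close> show "(\<lambda>z. grad K z $ i) differentiable at y" by (simp add: gi_eq)
  qed
  have hessv: "\<And>y w. y \<in> X \<Longrightarrow> hess K y *v w = (\<chi> i. frechet_derivative (\<lambda>z. grad K z $ i) (at y) w)"
  proof -
    fix y w assume y: "y \<in> X"
    show "hess K y *v w = (\<chi> i. frechet_derivative (\<lambda>z. grad K z $ i) (at y) w)"
    proof (subst vec_eq_iff, intro allI)
      fix i
      have "(hess K y *v w) $ i = grad (\<lambda>z. grad K z $ i) y \<bullet> w"
        by (simp add: matrix_vector_mult_def hess_def grad_def inner_vec_def)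
      also have "\<dots> = frechet_derivative (\<lambda>z. grad K z $ i) (at y) w"
        using grad_inner diffg[OF y] by blast
      finally show "(hess K y *v w) $ i = (\<chi> i. frechet_derivative (\<lambda>z. grad K z $ i) (at y) w) $ i"
        by simp
    qed
  qed
  have p_deriv: "\<And>a d t. a + t *\<^sub>R d \<in> X \<Longrightarrow>
     ((\<lambda>t. grad K (a + t *\<^sub>R d) \<bullet> d) has_real_derivative ((hess K (a + t *\<^sub>R d) *v d) \<bullet> d)) (at t)"
  proof -
    fix a d t assume at: "a + t *\<^sub>R d \<in> X"
    have "((\<lambda>t. grad K (a + t *\<^sub>R d) $ i * d $ i) has_real_derivative
        frechet_derivative (\<lambda>z. grad K z $ i) (at (a + t *\<^sub>R d)) d * d $ i) (at t)" for i
      using DERIV_cmult_right[OF deriv_line[where f="\<lambda>z. grad K z $ i", OF diffg[OF at]]] by simp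
    then have "((\<lambda>t. \<Sum>i\<in>UNIV. grad K (a + t *\<^sub>R d) $ i * d $ i) has_real_derivative
        (\<Sum>i\<in>UNIV. frechet_derivative (\<lambda>z. grad K z $ i) (at (a + t *\<^sub>R d)) d * d $ i)) (at t)"
      by (rule DERIV_sum)
    then show "((\<lambda>t. grad K (a + t *\<^sub>R d) \<bullet> d) has_real_derivative ((hess K (a + t *\<^sub>R d) *v d) \<bullet> d)) (at t)"
      by (simp add: hessv[OF at] inner_vec_def)
  qed
  have seg: "\<And>a b t. a \<in> X \<Longrightarrow> b \<in> X \<Longrightarrow> 0 \<le> t \<Longrightarrow> t \<le> 1 \<Longrightarrow> a + t *\<^sub>R (b - a) \<in> X"
  proof -
    fix a b and t :: real assume "a \<in> X" "b \<in> X" "0 \<le> t" "t \<le> 1"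
    then have "(1 - t) *\<^sub>R a + t *\<^sub>R b \<in> X" using X_convex by (simp add: convex_alt)
    moreover have "(1 - t) *\<^sub>R a + t *\<^sub>R b = a + t *\<^sub>R (b - a)" by (simp add: algebra_simps)
    ultimately show "a + t *\<^sub>R (b - a) \<in> X" by simp
  qed
  have inj: "\<And>a b. a \<in> X \<Longrightarrow> b \<in> X \<Longrightarrow> grad K a = grad K b \<Longrightarrow> a = b"
  proof (rule ccontr)
    fix a b assume a: "a \<in> X" and b: "b \<in> X" and eq: "grad K a = grad K b" and ne: "a \<noteq> b"
    have "\<exists>z. 0 < z \<and> z < 1 \<and> grad K (a + 1 *\<^sub>R (b - a)) \<bullet> (b - a) - grad K (a + 0 *\<^sub>R (b - a)) \<bullet> (b - a)
       = (1 - 0) * ((hess K (a + z *\<^sub>R (b - a)) *v (b - a)) \<bullet> (b - a))"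
      by (rule MVT2) (auto intro!: p_deriv seg a b)
    then obtain z where z: "0 < z" "z < 1" and
      zeq: "grad K (a + 1 *\<^sub>R (b - a)) \<bullet> (b - a) - grad K (a + 0 *\<^sub>R (b - a)) \<bullet> (b - a)
       = (1 - 0) * ((hess K (a + z *\<^sub>R (b - a)) *v (b - a)) \<bullet> (b - a))" by blast
    have "a + z *\<^sub>R (b - a) \<in> X" using seg a b z by simp
    then have "pos_def (hess K (a + z *\<^sub>R (b - a)))" using K_pd by blast
    then have "(b - a) \<bullet> (hess K (a + z *\<^sub>R (b - a)) *v (b - a)) > 0" using ne unfolding pos_def_def by simp
    then show False using zeq eq by (simp add: inner_commute)
  qed
  have S_eq: "\<And>x. x \<in> X \<Longrightarrow> legendre K X (grad K x) = grad K x \<bullet> x - K x"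
  proof -
    fix x assume x: "x \<in> X"
    have "(THE y. y \<in> X \<and> grad K y = grad K x) = x"
      by (rule the_equality) (use x inj in auto)
    then show "legendre K X (grad K x) = grad K x \<bullet> x - K x" by (simp add: legendre_def Let_def)
  qed
  have lower: "\<And>x. x \<in> X \<Longrightarrow> - K 0 \<le> grad K x \<bullet> x - K x"
  proof -
    fix x assume x: "x \<in> X"
    let ?g = "\<lambda>t. 0 + t *\<^sub>R (x - 0)"
    have lin0: "\<And>t. 0 \<le> t \<Longrightarrow> t \<le> 1 \<Longrightarrow> ?g t \<in> X" using seg zero_in x by blast
    have dK: "DERIV (\<lambda>t. K (?g t)) t :> grad K (?g t) \<bullet> (x - 0)" if "0 \<le> t" "t \<le> 1" for t
    proof -
      have d: "K differentiable at (?g t)" using diffK lin0 that by blast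
      show ?thesis using deriv_line[OF d] unfolding grad_inner[OF d] .
    qed
    have "\<exists>z. 0 < z \<and> z < 1 \<and> K (?g 1) - K (?g 0) = (1 - 0) * (grad K (?g z) \<bullet> (x - 0))"
      by (rule MVT2[OF zero_less_one dK])
    then obtain z where z: "0 < z" "z < 1" and zeq: "K (?g 1) - K (?g 0) = (1 - 0) * (grad K (?g z) \<bullet> (x - 0))"
      by blast
    have "\<exists>w. z < w \<and> w < 1 \<and> grad K (?g 1) \<bullet> (x - 0) - grad K (?g z) \<bullet> (x - 0)
        = (1 - z) * ((hess K (?g w) *v (x - 0)) \<bullet> (x - 0))"
    proof (rule MVT2[OF z(2)])
      fix t assume t: "z \<le> t" "t \<le> 1"
      show "DERIV (\<lambda>t. grad K (?g t) \<bullet> (x - 0)) t :> (hess K (?g t) *v (x - 0)) \<bullet> (x - 0)"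
        by (rule p_deriv, rule lin0) (use z t in auto)
    qed
    then obtain w where w: "z < w" "w < 1" and weq: "grad K (?g 1) \<bullet> (x - 0) - grad K (?g z) \<bullet> (x - 0)
        = (1 - z) * ((hess K (?g w) *v (x - 0)) \<bullet> (x - 0))" by blast
    have "pos_def (hess K (?g w))" using K_pd lin0 w z by simp
    then have "(hess K (?g w) *v (x - 0)) \<bullet> (x - 0) \<ge> 0"
      unfolding pos_def_def by (cases "x - 0 = 0") (auto simp: inner_commute less_imp_le)
    then have "(1 - z) * ((hess K (?g w) *v (x - 0)) \<bullet> (x - 0)) \<ge> 0" using w z by simp
    then show "- K 0 \<le> grad K x \<bullet> x - K x" using zeq weq by simp
  qed
  have bdd: "bdd_below ((\<lambda>x. legendre K X (grad K x)) ` X)"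
    unfolding bdd_below_def using lower S_eq by (intro exI[of _ "- K 0"]) auto
  have gradS: "grad (\<lambda>x'. legendre K X (grad K x')) x \<bullet> w = x \<bullet> (hess K x *v w)" if x: "x \<in> X" for x w
  proof -
    let ?S = "\<lambda>y. legendre K X (grad K y)"
    let ?F = "\<lambda>y. (\<Sum>i\<in>UNIV. grad K y $ i * y $ i) - K y"
    let ?D = "\<lambda>w. (\<Sum>i\<in>UNIV. grad K x $ i * w $ i + frechet_derivative (\<lambda>z. grad K z $ i) (at x) w * x $ i)
                 - frechet_derivative K (at x) w"
    have gi: "((\<lambda>z. grad K z $ i) has_derivative frechet_derivative (\<lambda>z. grad K z $ i) (at x)) (at x)" for i
      using diffg[OF x] frechet_derivative_works by blast
    have Kd: "(K has_derivative frechet_derivative K (at x)) (at x)"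
      using diffK[OF x] frechet_derivative_works by blast
    have nth: "((\<lambda>y::real^'n. y $ i) has_derivative (\<lambda>w. w $ i)) (at x)" for i
      using bounded_linear_vec_nth by (rule bounded_linear.has_derivative[OF _ has_derivative_ident])
    have FD: "(?F has_derivative ?D) (at x)"
      by (intro has_derivative_diff has_derivative_sum has_derivative_mult gi nth Kd)
    have SD: "(?S has_derivative ?D) (at x)"
      by (rule has_derivative_transform_within_open[OF FD X_open x]) (simp add: S_eq inner_vec_def)
    have Sdiff: "?S differentiable at x" using SD differentiable_def by blast
    have "grad ?S x \<bullet> w = ?D w"
      using grad_inner[OF Sdiff] frechet_derivative_at[OF SD, symmetric] by simp
    also have "\<dots> = (grad K x \<bullet> w - frechet_derivative K (at x) w) + (hess K x *v w) \<bullet> x"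
      by (simp add: hessv[OF x] inner_vec_def sum.distrib)
    also have "\<dots> = x \<bullet> (hess K x *v w)"
      using grad_inner[OF diffK[OF x], of w] by (simp add: inner_commute)
    finally show ?thesis .
  qed
  have inv: "hess K x *v (matrix_inv (hess K x) *v v) = v" if x: "x \<in> X" for x v
  proof -
    let ?H = "hess K x"
    have "\<forall>v. ?H *v v = 0 \<longrightarrow> v = 0"
      using K_pd x unfolding pos_def_def by (metis inner_zero_right less_irrefl)
    then have "\<exists>B. B ** ?H = mat 1" by (simp add: matrix_left_invertible_ker)
    then have "invertible ?H" by (simp add: invertible_left_inverse)
    then have "?H ** matrix_inv ?H = mat 1 \<and> matrix_inv ?H ** ?H = mat 1"
      unfolding invertible_def matrix_inv_def by (rule someI_ex)
    then show ?thesis by (simp add: matrix_vector_mul_assoc)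
  qed
  show ?thesis
  proof (intro conjI bdd ballI allI)
    fix x u assume x: "x \<in> X"
    have neg: "\<And>(A::real^'n^'n) y. A *v (- y) = - (A *v y)"
      by (simp add: vec_eq_iff matrix_vector_mult_def sum_negf)
    have "grad (\<lambda>x'. legendre K X (grad K x')) x \<bullet> (- (matrix_inv (hess K x) *v grad (\<lambda>x'. V x' u) x))
        = - (x \<bullet> grad (\<lambda>x'. V x' u) x)"
      by (simp add: gradS[OF x] neg inv[OF x])
    then show "grad (\<lambda>x'. legendre K X (grad K x')) x \<bullet> (- (matrix_inv (hess K x) *v grad (\<lambda>x'. V x' u) x))
            \<le> u \<bullet> (- grad (\<lambda>u'. V x u') u)"
      using V_cond x by auto
  qed
qed

end
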